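(* Let $\kappa\geq\omega$ be a cardinal smaller than the first measurable cardinal, and let $\Phi\subseteq P(\kappa)$ be a filter all of whose elements are infinite sets. Then there is a partition $\kappa=\bigcup_{n\in\omega}I_n$ (into pairwise disjoint sets, some possibly empty) such that for every $F\in\Phi$ the set $\{n\in\omega: F\cap I_n\neq\emptyset\}$ is infinite.
   Context: A filter on a set $I$ is a nonempty family of subsets of $I$ closed under supersets and finite intersections. "Smaller than the first measurable cardinal" means: if measurable cardinals exist, $\kappa$ is below the least one; if none exist, every cardinal qualifies. Equivalently, every countably complete ultrafilter on $\kappa$ is principal. *)

theory Defs
  imports Main
begin

definition is_filter_on :: "'a set \<Rightarrow> 'a set set \<Rightarrow> bool" where
  "is_filter_on I \<Phi> \<longleftrightarrow>
     \<Phi> \<subseteq> Pow I \<and> \<Phi> \<noteq> {} \<and>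
     (\<forall>A B. A \<in> \<Phi> \<and> A \<subseteq> B \<and> B \<subseteq> I \<longrightarrow> B \<in> \<Phi>) \<and>
     (\<forall>A B. A \<in> \<Phi> \<and> B \<in> \<Phi> \<longrightarrow> A \<inter> B \<in> \<Phi>)"

definition is_ultrafilter_on :: "'a set \<Rightarrow> 'a set set \<Rightarrow> bool" where
  "is_ultrafilter_on I U \<longleftrightarrow>
     is_filter_on I U \<and> {} \<notin> U \<and> (\<forall>A. A \<subseteq> I \<longrightarrow> A \<in> U \<or> I - A \<in> U)"

definition countably_complete :: "'a set set \<Rightarrow> bool" where
  "countably_complete U \<longleftrightarrow> (\<forall>X :: nat \<Rightarrow> 'a set. (\<forall>n. X n \<in> U) \<longrightarrow> (\<Inter>n. X n) \<in> U)"

definition principal_on :: "'a set \<Rightarrow> 'a set set \<Rightarrow> bool" where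
  "principal_on I U \<longleftrightarrow> (\<exists>x\<in>I. U = {A. A \<subseteq> I \<and> x \<in> A})"

definition below_first_measurable :: "'a set \<Rightarrow> bool" where
  "below_first_measurable I \<longleftrightarrow>
     (\<forall>U. is_ultrafilter_on I U \<and> countably_complete U \<longrightarrow> principal_on I U)"

end

theory Submission
  imports Defs
begin

lemma flt_sub: "is_filter_on I U \<Longrightarrow> F \<in> U \<Longrightarrow> F \<subseteq> I"
  unfolding is_filter_on_def by blast
lemma flt_int: "is_filter_on I U \<Longrightarrow> A \<in> U \<Longrightarrow> B \<in> U \<Longrightarrow> A \<inter> B \<in> U"
  unfolding is_filter_on_def by blast
lemma flt_up: "is_filter_on I U \<Longrightarrow> A \<in> U \<Longrightarrow> A \<subseteq> B \<Longrightarrow> B \<subseteq> I \<Longrightarrow> B \<in> U"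
  unfolding is_filter_on_def by blast
lemma flt_ne: "is_filter_on I U \<Longrightarrow> \<exists>A. A \<in> U"
  unfolding is_filter_on_def using ex_in_conv by metis
lemma flt_I: "U \<subseteq> Pow I \<Longrightarrow> U \<noteq> {} \<Longrightarrow> (\<And>A B. A \<in> U \<Longrightarrow> A \<subseteq> B \<Longrightarrow> B \<subseteq> I \<Longrightarrow> B \<in> U)
  \<Longrightarrow> (\<And>A B. A \<in> U \<Longrightarrow> B \<in> U \<Longrightarrow> A \<inter> B \<in> U) \<Longrightarrow> is_filter_on I U"
  unfolding is_filter_on_def by (intro conjI allI impI) auto

lemma ultra_exists:
  assumes filt: "is_filter_on I \<Phi>" and inf: "\<forall>F\<in>\<Phi>. infinite F"
  shows "\<exists>U. is_ultrafilter_on I U \<and> \<Phi> \<subseteq> U \<and> (\<forall>F\<in>U. infinite F)"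
proof -
  define A where "A = {G. is_filter_on I G \<and> \<Phi> \<subseteq> G \<and> (\<forall>F\<in>G. infinite F)}"
  have PhiA: "\<Phi> \<in> A" using assms unfolding A_def by auto
  have "\<forall>C\<in>chains A. \<exists>U\<in>A. \<forall>X\<in>C. X \<subseteq> U"
  proof
    fix C assume C: "C \<in> chains A"
    show "\<exists>U\<in>A. \<forall>X\<in>C. X \<subseteq> U"
    proof (cases "C = {}")
      case True then show ?thesis using PhiA by auto
    next
      case False
      then obtain G0 where G0: "G0 \<in> C" by blast
      have CA: "C \<subseteq> A" and ch: "\<And>X Y. X\<in>C \<Longrightarrow> Y\<in>C \<Longrightarrow> X \<subseteq> Y \<or> Y \<subseteq> X"
        using C unfolding chains_def chain_subset_def by auto
      have fF: "is_filter_on I G" and fP: "\<Phi> \<subseteq> G" and fI: "\<forall>F\<in>G. infinite F" if "G \<in> C" for G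
        using CA that unfolding A_def by auto
      have "is_filter_on I (\<Union>C)"
      proof (rule flt_I)
        show "\<Union>C \<subseteq> Pow I"
        proof
          fix X assume "X \<in> \<Union>C"
          then obtain G where "G \<in> C" "X \<in> G" by blast
          then show "X \<in> Pow I" using flt_sub[OF fF] by blast
        qed
        show "\<Union>C \<noteq> {}"
        proof -
          obtain X where "X \<in> G0" using flt_ne[OF fF[OF G0]] by blast
          then show ?thesis using G0 by blast
        qed
        show "B \<in> \<Union>C" if "X \<in> \<Union>C" "X \<subseteq> B" "B \<subseteq> I" for X B
        proof -
          from that obtain G where "G \<in> C" "X \<in> G" by blast
          then have "B \<in> G" using flt_up[OF fF[OF \<open>G \<in> C\<close>]] that by blast
          then show ?thesis using \<open>G \<in> C\<close> by blast
        qed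
        show "X \<inter> Y \<in> \<Union>C" if "X \<in> \<Union>C" "Y \<in> \<Union>C" for X Y
        proof -
          from that obtain G1 G2 where g: "G1 \<in> C" "G2 \<in> C" "X \<in> G1" "Y \<in> G2" by blast
          show "X \<inter> Y \<in> \<Union>C"
          proof (cases "G1 \<subseteq> G2")
            case True
            then have "X \<inter> Y \<in> G2" using flt_int[OF fF[OF g(2)]] g by blast
            then show ?thesis using g by blast
          next
            case False then have "G2 \<subseteq> G1" using ch g by blast
            then have "X \<inter> Y \<in> G1" using flt_int[OF fF[OF g(1)]] g by blast
            then show ?thesis using g by blast
          qed
        qed
      qed
      moreover have "\<Phi> \<subseteq> \<Union>C" using fP[OF G0] G0 by blast
      moreover have "\<forall>F\<in>\<Union>C. infinite F" using fI by blast
      ultimately have "\<Union>C \<in> A" unfolding A_def by blast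
      then show ?thesis by blast
    qed
  qed
  from Zorn_Lemma2[OF this] obtain M where MA: "M \<in> A" and max: "\<And>X. X\<in>A \<Longrightarrow> M \<subseteq> X \<Longrightarrow> X = M" by blast
  have Mf: "is_filter_on I M" and PM: "\<Phi> \<subseteq> M" and Minf: "\<forall>F\<in>M. infinite F"
    using MA unfolding A_def by auto
  have ext: "A' \<in> M" if A'I: "A' \<subseteq> I" and h: "\<forall>G\<in>M. infinite (G \<inter> A')" for A'
  proof -
    define N where "N = {B. B \<subseteq> I \<and> (\<exists>G\<in>M. G \<inter> A' \<subseteq> B)}"
    have MN: "M \<subseteq> N"
    proof
      fix X assume "X \<in> M"
      then have "X \<subseteq> I" using flt_sub[OF Mf] by blast
      then show "X \<in> N" unfolding N_def using \<open>X \<in> M\<close> by blast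
    qed
    obtain G0 where G0: "G0 \<in> M" using flt_ne[OF Mf] by blast
    have "is_filter_on I N"
    proof (rule flt_I)
      show "N \<subseteq> Pow I" unfolding N_def by auto
      show "N \<noteq> {}" using MN G0 by blast
      show "Y \<in> N" if "X \<in> N" "X \<subseteq> Y" "Y \<subseteq> I" for X Y using that unfolding N_def by blast
      show "X \<inter> Y \<in> N" if xy: "X \<in> N" "Y \<in> N" for X Y
      proof -
        obtain G1 where "G1 \<in> M" "G1 \<inter> A' \<subseteq> X" "X \<subseteq> I" using xy(1) unfolding N_def by blast
        moreover obtain G2 where "G2 \<in> M" "G2 \<inter> A' \<subseteq> Y" "Y \<subseteq> I" using xy(2) unfolding N_def by blast
        moreover have "G1 \<inter> G2 \<in> M" using calculation flt_int[OF Mf] by blast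
        moreover have "(G1 \<inter> G2) \<inter> A' \<subseteq> X \<inter> Y" using calculation by blast
        ultimately show "X \<inter> Y \<in> N" unfolding N_def by blast
      qed
    qed
    moreover have "\<forall>F\<in>N. infinite F"
    proof
      fix F assume "F \<in> N"
      then obtain G where "G \<in> M" "G \<inter> A' \<subseteq> F" unfolding N_def by blast
      then show "infinite F" using h finite_subset by blast
    qed
    ultimately have "N \<in> A" using PM MN unfolding A_def by blast
    then have "N = M" using max MN by blast
    moreover have "A' \<in> N" unfolding N_def using A'I G0 by blast
    ultimately show ?thesis by simp
  qed
  have "is_ultrafilter_on I M"
    unfolding is_ultrafilter_on_def
  proof (intro conjI allI impI)
    show "is_filter_on I M" by (rule Mf)
    show "{} \<notin> M" using Minf by auto
    fix A' assume A'I: "A' \<subseteq> I"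
    show "A' \<in> M \<or> I - A' \<in> M"
    proof (rule ccontr)
      assume nn: "\<not> (A' \<in> M \<or> I - A' \<in> M)"
      then obtain G1 where G1: "G1 \<in> M" "finite (G1 \<inter> A')" using ext A'I by blast
      obtain G2 where G2: "G2 \<in> M" "finite (G2 \<inter> (I - A'))" using ext[of "I - A'"] nn by blast
      have GG: "G1 \<inter> G2 \<in> M" using flt_int[OF Mf G1(1) G2(1)] .
      have "G2 \<subseteq> I" using flt_sub[OF Mf G2(1)] .
      then have "G1 \<inter> G2 \<subseteq> (G1 \<inter> A') \<union> (G2 \<inter> (I - A'))" by blast
      moreover have "finite ((G1 \<inter> A') \<union> (G2 \<inter> (I - A')))" using G1 G2 by simp
      ultimately have "finite (G1 \<inter> G2)" by (rule finite_subset)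
      then show False using Minf GG by blast
    qed
  qed
  then show ?thesis using PM Minf by blast
qed

theorem fact2p2:
  fixes I :: "'a set" and \<Phi> :: "'a set set"
  assumes "infinite I"
    and "below_first_measurable I"
    and "is_filter_on I \<Phi>"
    and "\<forall>F\<in>\<Phi>. infinite F"
  shows "\<exists>P :: nat \<Rightarrow> 'a set.
           (\<Union>n. P n) = I \<and>
           (\<forall>m n. m \<noteq> n \<longrightarrow> P m \<inter> P n = {}) \<and>
           (\<forall>F\<in>\<Phi>. infinite {n. F \<inter> P n \<noteq> {}})"
proof -
  obtain U where U: "is_ultrafilter_on I U" and PU: "\<Phi> \<subseteq> U" and Uinf: "\<forall>F\<in>U. infinite F"
    using ultra_exists assms(3,4) by blast
  have Uf: "is_filter_on I U" using U unfolding is_ultrafilter_on_def by auto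
  have "\<not> principal_on I U"
  proof
    assume "principal_on I U"
    then obtain x where "x \<in> I" "U = {A. A \<subseteq> I \<and> x \<in> A}" unfolding principal_on_def by blast
    then have "{x} \<in> U" by auto
    then show False using Uinf by auto
  qed
  then have "\<not> countably_complete U" using assms(2) U unfolding below_first_measurable_def by blast
  then obtain X :: "nat \<Rightarrow> 'a set" where XU: "\<forall>n. X n \<in> U" and nZ: "(\<Inter>n. X n) \<notin> U"
    unfolding countably_complete_def by blast
  define Z where "Z = (\<Inter>n. X n)"
  have ZI: "Z \<subseteq> I" using flt_sub[OF Uf XU[rule_format, of 0]] unfolding Z_def by blast
  have IZ: "I - Z \<in> U" using U nZ ZI unfolding is_ultrafilter_on_def Z_def by blast
  define Y where "Y n = (I - Z) \<inter> (\<Inter>k\<in>{..n}. X k)" for n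
  have YU: "Y n \<in> U" for n
  proof (induction n)
    case 0 then show ?case using flt_int[OF Uf IZ XU[rule_format, of 0]] unfolding Y_def by simp
  next
    case (Suc n)
    have "Y (Suc n) = Y n \<inter> X (Suc n)" unfolding Y_def by (auto simp: atMost_Suc)
    then show ?case using flt_int[OF Uf Suc XU[rule_format, of "Suc n"]] by simp
  qed
  have Ydec: "m \<le> n \<Longrightarrow> Y n \<subseteq> Y m" for m n unfolding Y_def by auto
  have Yemp: "\<exists>n. x \<notin> Y n" for x
  proof (rule ccontr)
    assume "\<not> (\<exists>n. x \<notin> Y n)"
    then have "\<forall>n. x \<in> Y n" by blast
    then have "x \<in> Z" "x \<notin> Z" unfolding Y_def Z_def by auto
    then show False by simp
  qed
  have YI: "Y n \<subseteq> I" for n unfolding Y_def by auto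
  define P where "P n = (case n of 0 \<Rightarrow> I - Y 0 | Suc k \<Rightarrow> Y k - Y (Suc k))" for n
  have P0: "P 0 = I - Y 0" and PS: "P (Suc k) = Y k - Y (Suc k)" for k unfolding P_def by auto
  have cov: "(\<Union>n\<le>N. P n) = I - Y N" for N
  proof (induction N)
    case 0 then show ?case using P0 by simp
  next
    case (Suc N)
    have "(\<Union>n\<le>Suc N. P n) = (I - Y N) \<union> (Y N - Y (Suc N))" using Suc by (simp add: atMost_Suc PS Un_commute)
    also have "\<dots> = I - Y (Suc N)" using YI Ydec[of N "Suc N"] by auto
    finally show ?case .
  qed
  have "(\<Union>n. P n) = I"
  proof
    show "(\<Union>n. P n) \<subseteq> I" using cov by blast
    show "I \<subseteq> (\<Union>n. P n)"
    proof
      fix x assume "x \<in> I"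
      obtain n where "x \<notin> Y n" using Yemp by blast
      then have "x \<in> (\<Union>k\<le>n. P k)" using cov \<open>x \<in> I\<close> by blast
      then show "x \<in> (\<Union>n. P n)" by blast
    qed
  qed
  moreover have "\<forall>m n. m \<noteq> n \<longrightarrow> P m \<inter> P n = {}"
  proof -
    have "P m \<inter> P n = {}" if "m < n" for m n
    proof -
      define k where "k = n - 1"
      have k: "n = Suc k" using that unfolding k_def by simp
      have mk: "m \<le> k" using that k by simp
      have "P m \<subseteq> (\<Union>i\<le>k. P i)" using mk by blast
      then have "P m \<subseteq> I - Y k" using cov[of k] by simp
      moreover have "P n \<subseteq> Y k" using k PS by auto
      ultimately show ?thesis by blast
    qed
    then show ?thesis by (metis inf_commute linorder_neqE_nat)
  qed
  moreover have "\<forall>F\<in>\<Phi>. infinite {n. F \<inter> P n \<noteq> {}}"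
  proof
    fix F assume "F \<in> \<Phi>"
    then have FU: "F \<in> U" using PU by auto
    show "infinite {n. F \<inter> P n \<noteq> {}}"
    proof
      assume fin: "finite {n. F \<inter> P n \<noteq> {}}"
      then obtain N where N: "\<forall>n\<in>{n. F \<inter> P n \<noteq> {}}. n \<le> N"
        using finite_nat_set_iff_bounded_le by blast
      have FI: "F \<subseteq> I" using flt_sub[OF Uf FU] .
      have "F \<subseteq> (\<Union>n\<le>N. P n)"
      proof
        fix x assume "x \<in> F"
        then have "x \<in> (\<Union>n. P n)" using FI \<open>(\<Union>n. P n) = I\<close> by blast
        then obtain n where "x \<in> P n" by blast
        then have "n \<le> N" using N \<open>x \<in> F\<close> by blast
        then show "x \<in> (\<Union>n\<le>N. P n)" using \<open>x \<in> P n\<close> by blast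
      qed
      then have "F \<inter> Y N = {}" using cov by blast
      moreover have "F \<inter> Y N \<in> U" using flt_int[OF Uf FU YU] .
      ultimately show False using Uinf by auto
    qed
  qed
  ultimately show ?thesis by (intro exI[of _ P]) simp
qed

end
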